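(* Let $P$ be a finite poset with $n$ elements and $k\ge 0$. Then there is a bijection between $\mathrm{Lin}^{+k}(P)$ and the set of triples $(T,\bar t,\bar p)$ where $T\in\mathrm{Lin}(P)$, $\bar t=(t_1,\dots,t_k)$ is a sequence of integers with $0<t_1\le\cdots\le t_k\le n$, and $\bar p=(p_1,\dots,p_k)\in P^k$ with $p_i$ a maximal element of $T^{-1}(\{1,\dots,t_i\})$ for every $i$.
   Context: $\mathrm{Lin}(P)$ is the set of linear extensions of $P$: bijections $T:P\to[n]$ with $T(p)<T(q)$ whenever $p<q$. $\mathrm{Lin}^{+k}(P)$ is the set of set-valued linear extensions with values in $[n+k]$: maps $S$ from $P$ to subsets of $[n+k]$ such that each $S(p)$ is nonempty, the sets $S(p)$ are pairwise disjoint with union $[n+k]$, and $\max S(p)<\min S(q)$ whenever $p<q$. *)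

theory Defs
  imports "HOL-Library.FuncSet"
begin

text \<open>A finite poset is a finite carrier set P with a partial order r (library notion
  partial_order_on P r, so r is a reflexive relation on P).  Strict order: p < q.\<close>

definition pstrict :: "('a \<times> 'a) set \<Rightarrow> 'a \<Rightarrow> 'a \<Rightarrow> bool" where
  "pstrict r p q \<longleftrightarrow> (p, q) \<in> r \<and> p \<noteq> q"

definition Lin :: "'a set \<Rightarrow> ('a \<times> 'a) set \<Rightarrow> ('a \<Rightarrow> nat) set" where
  "Lin P r = {T. T \<in> P \<rightarrow>\<^sub>E {1..card P} \<and> bij_betw T P {1..card P} \<and>
      (\<forall>p\<in>P. \<forall>q\<in>P. pstrict r p q \<longrightarrow> T p < T q)}"

definition LinPlus :: "'a set \<Rightarrow> ('a \<times> 'a) set \<Rightarrow> nat \<Rightarrow> ('a \<Rightarrow> nat set) set" where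
  "LinPlus P r k = {S. S \<in> P \<rightarrow>\<^sub>E Pow {1..card P + k} \<and>
      (\<forall>p\<in>P. S p \<noteq> {}) \<and>
      (\<forall>p\<in>P. \<forall>q\<in>P. p \<noteq> q \<longrightarrow> S p \<inter> S q = {}) \<and>
      (\<Union>p\<in>P. S p) = {1..card P + k} \<and>
      (\<forall>p\<in>P. \<forall>q\<in>P. pstrict r p q \<longrightarrow> Max (S p) < Min (S q))}"

definition is_maximal_in :: "('a \<times> 'a) set \<Rightarrow> 'a set \<Rightarrow> 'a \<Rightarrow> bool" where
  "is_maximal_in r A p \<longleftrightarrow> p \<in> A \<and> (\<forall>q\<in>A. \<not> pstrict r p q)"

definition Triples :: "'a set \<Rightarrow> ('a \<times> 'a) set \<Rightarrow> nat \<Rightarrow>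
    (('a \<Rightarrow> nat) \<times> nat list \<times> 'a list) set" where
  "Triples P r k = {(T, ts, ps). T \<in> Lin P r \<and>
      length ts = k \<and> sorted ts \<and> (\<forall>i<k. 0 < ts ! i \<and> ts ! i \<le> card P) \<and>
      length ps = k \<and>
      (\<forall>i<k. ps ! i \<in> P \<and> is_maximal_in r {q \<in> P. T q \<in> {1..ts ! i}} (ps ! i))}"

end

theory Submission
  imports Defs
begin


fun decr :: "'a list \<Rightarrow> 'a list \<times> nat list \<times> 'a list" where
  "decr [] = ([], [], [])"
| "decr (x # xs) = (case decr xs of (L, ts, ps) \<Rightarrow>
     if x \<in> set xs then (L, ts @ [length L], ps @ [x]) else (L @ [x], ts, ps))"

definition dec :: "'a list \<Rightarrow> 'a list \<times> nat list \<times> 'a list" where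
  "dec w = decr (rev w)"

lemma dec_Nil[simp]: "dec [] = ([],[],[])" by (simp add: dec_def)

lemma dec_snoc: "dec (w @ [x]) = (case dec w of (L, ts, ps) \<Rightarrow>
     if x \<in> set w then (L, ts @ [length L], ps @ [x]) else (L @ [x], ts, ps))"
  by (simp add: dec_def)

definition Dgood :: "'a list \<Rightarrow> nat list \<Rightarrow> 'a list \<Rightarrow> bool" where
  "Dgood L ts ps \<longleftrightarrow> distinct L \<and> length ts = length ps \<and> sorted ts \<and>
     (\<forall>i<length ts. 0 < ts!i \<and> ts!i \<le> length L \<and> ps!i \<in> set (take (ts!i) L))"

lemma dec_inv: "dec w = (L,ts,ps) \<Longrightarrow> Dgood L ts ps \<and> set L = set w \<and> length L + length ts = length w"
proof (induction w arbitrary: L ts ps rule: rev_induct)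
  case Nil
  then show ?case by (auto simp: Dgood_def)
next
  case (snoc x w)
  obtain L0 ts0 ps0 where d: "dec w = (L0,ts0,ps0)" by (cases "dec w") auto
  from snoc.IH[OF d] have IH: "Dgood L0 ts0 ps0" "set L0 = set w" "length L0 + length ts0 = length w" by auto
  show ?case
  proof (cases "x \<in> set w")
    case True
    with snoc.prems d have e: "L = L0" "ts = ts0 @ [length L0]" "ps = ps0 @ [x]" by (auto simp: dec_snoc)
    have pos: "0 < length L0" using True IH(2) by (cases L0) auto
    have "sorted ts" using IH(1) unfolding e Dgood_def by (auto simp: sorted_append in_set_conv_nth)
    moreover have "\<forall>i<length ts. 0 < ts!i \<and> ts!i \<le> length L \<and> ps!i \<in> set (take (ts!i) L)"
    proof (intro allI impI)
      fix i assume "i < length ts"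
      then have "i < length ts0 \<or> i = length ts0" using e by auto
      then consider "i < length ts0" | "i = length ts0" by blast
      then show "0 < ts!i \<and> ts!i \<le> length L \<and> ps!i \<in> set (take (ts!i) L)"
      proof cases
        case 1 then show ?thesis using IH(1) unfolding e Dgood_def by (auto simp: nth_append)
      next
        case 2 then show ?thesis using IH pos True unfolding e Dgood_def by (auto simp: nth_append)
      qed
    qed
    ultimately show ?thesis using IH True unfolding e Dgood_def by auto
  next
    case False
    with snoc.prems d have e: "L = L0 @ [x]" "ts = ts0" "ps = ps0" by (auto simp: dec_snoc)
    have "\<forall>i<length ts. 0 < ts!i \<and> ts!i \<le> length L \<and> ps!i \<in> set (take (ts!i) L)"
      using IH(1) unfolding e Dgood_def by auto
    then show ?thesis using IH False unfolding e Dgood_def by auto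
  qed
qed

lemma dec_inj: "dec w = dec w' \<Longrightarrow> w = w'"
proof (induction w arbitrary: w' rule: rev_induct)
  case Nil
  obtain L ts ps where d: "dec w' = (L,ts,ps)" by (cases "dec w'") auto
  with Nil have "L = []" "ts = []" by auto
  with dec_inv[OF d] show ?case by auto
next
  case (snoc x w)
  obtain L0 ts0 ps0 where d: "dec w = (L0,ts0,ps0)" by (cases "dec w") auto
  have "w' \<noteq> []"
  proof
    assume "w' = []"
    with snoc.prems have "dec (w@[x]) = ([],[],[])" by simp
    with dec_inv[of "w@[x]"] show False by auto
  qed
  then obtain u y where u: "w' = u @ [y]" by (cases w' rule: rev_exhaust) auto
  obtain L1 ts1 ps1 where d1: "dec u = (L1,ts1,ps1)" by (cases "dec u") auto
  have g0: "Dgood L0 ts0 ps0" and g1: "Dgood L1 ts1 ps1" using dec_inv[OF d] dec_inv[OF d1] by auto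
  note eq = snoc.prems[unfolded u dec_snoc d d1]
  show ?case
  proof (cases "x \<in> set w"; cases "y \<in> set u")
    assume "x \<in> set w" "y \<in> set u"
    with eq have "dec w = dec u" "x = y" using d d1 by auto
    with snoc.IH u show ?thesis by auto
  next
    assume "x \<notin> set w" "y \<notin> set u"
    with eq have "dec w = dec u" "x = y" using d d1 by auto
    with snoc.IH u show ?thesis by auto
  next
    assume a: "x \<in> set w" "y \<notin> set u"
    with eq have "L0 = L1 @ [y]" "ts0 @ [length L0] = ts1" by auto
    then have "ts1 ! length ts0 = length L1 + 1" "length ts0 < length ts1" by auto
    with g1 show ?thesis unfolding Dgood_def by fastforce
  next
    assume a: "x \<notin> set w" "y \<in> set u"
    with eq have "L1 = L0 @ [x]" "ts1 @ [length L1] = ts0" by auto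
    then have "ts0 ! length ts1 = length L0 + 1" "length ts1 < length ts0" by auto
    with g0 show ?thesis unfolding Dgood_def by fastforce
  qed
qed

lemma dec_surj: "Dgood L ts ps \<Longrightarrow> \<exists>w. dec w = (L,ts,ps)"
proof (induction "length L + length ts" arbitrary: L ts ps rule: less_induct)
  case less
  show ?case
  proof (cases "ts \<noteq> [] \<and> last ts = length L")
    case True
    then obtain ts0 t where ts: "ts = ts0 @ [t]" by (cases ts rule: rev_exhaust) auto
    from less.prems have "length ps = length ts" by (auto simp: Dgood_def)
    then obtain ps0 p where ps: "ps = ps0 @ [p]" using ts by (cases ps rule: rev_exhaust) auto
    have lp: "length ps0 = length ts0" using \<open>length ps = length ts\<close> ts ps by simp
    have t: "t = length L" using True ts by simp
    have P: "distinct L" "sorted ts" "\<And>i. i<length ts \<Longrightarrow> 0 < ts!i \<and> ts!i \<le> length L \<and> ps!i \<in> set (take (ts!i) L)"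
      using less.prems unfolding Dgood_def by auto
    have g: "Dgood L ts0 ps0" unfolding Dgood_def
    proof (intro conjI allI impI)
      show "sorted ts0" using P(2) ts by (simp add: sorted_append)
      fix i assume i: "i < length ts0"
      have "i < length ts" using i ts by simp
      from P(3)[OF this] show "0 < ts0!i" "ts0!i \<le> length L" "ps0!i \<in> set (take (ts0!i) L)"
        using i lp ts ps by (auto simp: nth_append)
    qed (use P lp in auto)
    have "p \<in> set L"
    proof -
      have "length ts0 < length ts" using ts by simp
      from P(3)[OF this] have "ps ! length ts0 \<in> set (take (ts ! length ts0) L)" by blast
      then show ?thesis using ps lp by (auto simp: nth_append dest: in_set_takeD)
    qed
    from less.hyps[OF _ g] ts obtain w where w: "dec w = (L,ts0,ps0)" by auto
    have "set w = set L" using dec_inv[OF w] by auto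
    then have "dec (w @ [p]) = (L,ts,ps)" using w \<open>p \<in> set L\<close> t ts ps by (simp add: dec_snoc)
    then show ?thesis by blast
  next
    case False
    show ?thesis
    proof (cases "L = []")
      case True
      then have "ts = []" using less.prems unfolding Dgood_def
        by (metis le_zero_eq length_0_conv length_greater_0_conv list.size(3) not_less)
      then show ?thesis using less.prems True by (auto simp: Dgood_def intro: exI[of _ "[]"])
    next
      case Lne: False
      then obtain L0 x where L: "L = L0 @ [x]" by (cases L rule: rev_exhaust) auto
      have le: "ts!i \<le> length L0" if "i < length ts" for i
      proof -
        have s: "sorted ts" using less.prems by (simp add: Dgood_def)
        have "ts ! i \<le> ts ! (length ts - 1)" using sorted_nth_mono[OF s, of i "length ts - 1"] that by auto
        moreover have "ts ! (length ts - 1) = last ts" using that last_conv_nth[of ts] by (cases ts) auto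
        moreover have "ts ! (length ts - 1) \<le> length L" using less.prems that unfolding Dgood_def by auto
        ultimately show ?thesis using False that L by auto
      qed
      have g: "Dgood L0 ts ps" using less.prems le unfolding Dgood_def L by auto
      from less.hyps[OF _ g] L obtain w where w: "dec w = (L0,ts,ps)" by auto
      have "set w = set L0" using dec_inv[OF w] by auto
      moreover have "x \<notin> set L0" using less.prems L by (simp add: Dgood_def)
      ultimately have "dec (w @ [x]) = (L,ts,ps)" using w L by (simp add: dec_snoc)
      then show ?thesis by blast
    qed
  qed
qed


definition V :: "('a \<times> 'a) set \<Rightarrow> 'a list \<Rightarrow> bool" where
  "V r w \<longleftrightarrow> (\<forall>i<length w. \<forall>j<length w. pstrict r (w!i) (w!j) \<longrightarrow> i < j)"

definition C :: "('a \<times> 'a) set \<Rightarrow> 'a list \<Rightarrow> nat list \<Rightarrow> 'a list \<Rightarrow> bool" where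
  "C r L ts ps \<longleftrightarrow> V r L \<and> (\<forall>i<length ts. \<forall>q\<in>set (take (ts!i) L). \<not> pstrict r (ps!i) q)"

lemma V_snoc: "V r (w@[x]) \<longleftrightarrow> V r w \<and> (\<forall>y\<in>set w. \<not> pstrict r x y)"
proof
  assume a: "V r (w@[x])"
  have "V r w" unfolding V_def
  proof (intro allI impI)
    fix i j assume "i < length w" "j < length w" "pstrict r (w!i) (w!j)"
    moreover have "(w@[x])!i = w!i" "(w@[x])!j = w!j" "i < length (w@[x])" "j < length (w@[x])"
      using \<open>i < length w\<close> \<open>j < length w\<close> by (simp_all add: nth_append)
    ultimately show "i < j" using a unfolding V_def by metis
  qed
  moreover have "\<forall>y\<in>set w. \<not> pstrict r x y"
  proof
    fix y assume "y \<in> set w"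
    then obtain i where i: "i < length w" "w!i = y" by (auto simp: in_set_conv_nth)
    show "\<not> pstrict r x y"
    proof
      assume "pstrict r x y"
      then have "pstrict r ((w@[x])!length w) ((w@[x])!i)" using i by (simp add: nth_append)
      moreover have "length w < length (w@[x])" "i < length (w@[x])" using i by auto
      ultimately have "length w < i" using a unfolding V_def by blast
      with i show False by simp
    qed
  qed
  ultimately show "V r w \<and> (\<forall>y\<in>set w. \<not> pstrict r x y)" by blast
next
  assume a: "V r w \<and> (\<forall>y\<in>set w. \<not> pstrict r x y)"
  show "V r (w@[x])" unfolding V_def
  proof (intro allI impI)
    fix i j assume i: "i < length (w@[x])" and j: "j < length (w@[x])" and p: "pstrict r ((w@[x])!i) ((w@[x])!j)"
    consider "i < length w" "j < length w" | "i = length w" "j < length w" | "j = length w"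
      using i j by fastforce
    then show "i < j"
    proof cases
      case 1 then show ?thesis using a p unfolding V_def by (auto simp: nth_append)
    next
      case 2 then have "pstrict r x (w!j)" using p by (simp add: nth_append)
      with a 2 show ?thesis by auto
    next
      case 3
      show ?thesis
      proof (rule ccontr)
        assume "\<not> i < j"
        then have "i = j" using i 3 by simp
        with p show False by (simp add: pstrict_def)
      qed
    qed
  qed
qed

lemma V_C: "dec w = (L,ts,ps) \<Longrightarrow> V r w \<longleftrightarrow> C r L ts ps"
proof (induction w arbitrary: L ts ps rule: rev_induct)
  case Nil
  then show ?case by (auto simp: V_def C_def)
next
  case (snoc x w)
  obtain L0 ts0 ps0 where d: "dec w = (L0,ts0,ps0)" by (cases "dec w") auto
  have IH: "V r w \<longleftrightarrow> C r L0 ts0 ps0" using snoc.IH[OF d] .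
  from dec_inv[OF d] have g: "Dgood L0 ts0 ps0" "set L0 = set w" by auto
  show ?case
  proof (cases "x \<in> set w")
    case True
    with snoc.prems d have e: "L = L0" "ts = ts0 @ [length L0]" "ps = ps0 @ [x]" by (auto simp: dec_snoc)
    have lp: "length ps0 = length ts0" using g by (simp add: Dgood_def)
    have "C r L ts ps \<longleftrightarrow> C r L0 ts0 ps0 \<and> (\<forall>q\<in>set L0. \<not> pstrict r x q)"
    proof
      assume c: "C r L ts ps"
      have "\<forall>i<length ts0. \<forall>q\<in>set (take (ts0!i) L0). \<not> pstrict r (ps0!i) q"
      proof (intro allI impI ballI)
        fix i q assume "i < length ts0" "q \<in> set (take (ts0!i) L0)"
        moreover have "i < length ts" "ts!i = ts0!i" "ps!i = ps0!i" "L = L0"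
          using \<open>i < length ts0\<close> lp e by (simp_all add: nth_append)
        ultimately show "\<not> pstrict r (ps0!i) q" using c unfolding C_def by metis
      qed
      moreover have "\<forall>q\<in>set L0. \<not> pstrict r x q"
      proof -
        have "length ts0 < length ts" "ts!length ts0 = length L0" "ps!length ts0 = x" "L = L0"
          using lp e by (simp_all add: nth_append)
        then show ?thesis using c unfolding C_def by (metis take_all order_refl)
      qed
      ultimately show "C r L0 ts0 ps0 \<and> (\<forall>q\<in>set L0. \<not> pstrict r x q)" using c unfolding C_def e by auto
    next
      assume c: "C r L0 ts0 ps0 \<and> (\<forall>q\<in>set L0. \<not> pstrict r x q)"
      show "C r L ts ps" unfolding C_def
      proof (intro conjI allI impI ballI)
        show "V r L" using c e by (simp add: C_def)
        fix i q assume i: "i < length ts" and q: "q \<in> set (take (ts!i) L)"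
        show "\<not> pstrict r (ps!i) q"
        proof (cases "i < length ts0")
          case True then show ?thesis using c q lp unfolding C_def e by (auto simp: nth_append)
        next
          case False then have "i = length ts0" using i e by simp
          then show ?thesis using c q lp unfolding e by (auto simp: nth_append dest: in_set_takeD)
        qed
      qed
    qed
    then show ?thesis using IH V_snoc[of r w x] g True by auto
  next
    case False
    with snoc.prems d have e: "L = L0 @ [x]" "ts = ts0" "ps = ps0" by (auto simp: dec_snoc)
    have tk: "take (ts0!i) (L0@[x]) = take (ts0!i) L0" if "i < length ts0" for i
      using g that by (auto simp: Dgood_def)
    have "C r L ts ps \<longleftrightarrow> C r L0 ts0 ps0 \<and> (\<forall>q\<in>set L0. \<not> pstrict r x q)"
      unfolding C_def e V_snoc using tk by auto
    then show ?thesis using IH V_snoc[of r w x] g by auto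
  qed
qed

lemma bij_dec:
  assumes "finite P"
  shows "bij_betw dec {w. set w = P \<and> length w = card P + k \<and> V r w}
     {(L,ts,ps). Dgood L ts ps \<and> set L = P \<and> length ts = k \<and> C r L ts ps}"
  unfolding bij_betw_def
proof
  show "inj_on dec {w. set w = P \<and> length w = card P + k \<and> V r w}"
    by (rule inj_onI) (rule dec_inj)
  show "dec ` {w. set w = P \<and> length w = card P + k \<and> V r w} =
     {(L,ts,ps). Dgood L ts ps \<and> set L = P \<and> length ts = k \<and> C r L ts ps}"
  proof (intro equalityI subsetI)
    fix y assume "y \<in> dec ` {w. set w = P \<and> length w = card P + k \<and> V r w}"
    then obtain w where w: "set w = P" "length w = card P + k" "V r w" "y = dec w" by auto
    obtain L ts ps where d: "dec w = (L,ts,ps)" by (cases "dec w") auto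
    note i = dec_inv[OF d]
    have "length L = card P" using i w distinct_card[of L] by (auto simp: Dgood_def)
    then show "y \<in> {(L,ts,ps). Dgood L ts ps \<and> set L = P \<and> length ts = k \<and> C r L ts ps}"
      using i w d V_C[OF d, of r] by auto
  next
    fix y assume "y \<in> {(L,ts,ps). Dgood L ts ps \<and> set L = P \<and> length ts = k \<and> C r L ts ps}"
    then obtain L ts ps where y: "y = (L,ts,ps)" "Dgood L ts ps" "set L = P" "length ts = k" "C r L ts ps" by auto
    obtain w where d: "dec w = (L,ts,ps)" using dec_surj[OF y(2)] by auto
    note i = dec_inv[OF d]
    have "length L = card P" using y distinct_card[of L] by (auto simp: Dgood_def)
    then have "w \<in> {w. set w = P \<and> length w = card P + k \<and> V r w}" using i y V_C[OF d, of r] by auto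
    then show "y \<in> dec ` {w. set w = P \<and> length w = card P + k \<and> V r w}" unfolding y(1) d[symmetric] by (rule imageI)
  qed
qed


definition Tof :: "'a set \<Rightarrow> 'a list \<Rightarrow> 'a \<Rightarrow> nat" where
  "Tof P L = (\<lambda>p\<in>P. Suc (THE i. i < length L \<and> L!i = p))"

definition Lof :: "'a set \<Rightarrow> ('a \<Rightarrow> nat) \<Rightarrow> 'a list" where
  "Lof P T = map (\<lambda>i. inv_into P T (Suc i)) [0..<card P]"

lemma Tof_nth:
  assumes "distinct L" "set L = P" "i < length L"
  shows "Tof P L (L!i) = Suc i"
proof -
  have "L!i \<in> P" using assms by auto
  moreover have "(THE j. j < length L \<and> L!j = L!i) = i"
    using assms by (auto intro!: the_equality simp: nth_eq_iff_index_eq)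
  ultimately show ?thesis by (simp add: Tof_def)
qed

lemma Tof_props:
  assumes "distinct L" "set L = P"
  shows "Tof P L \<in> P \<rightarrow>\<^sub>E {1..card P}" "bij_betw (Tof P L) P {1..card P}"
    "\<And>t. {q\<in>P. Tof P L q \<in> {1..t}} = set (take t L)"
    "(\<forall>p\<in>P. \<forall>q\<in>P. pstrict r p q \<longrightarrow> Tof P L p < Tof P L q) \<longleftrightarrow> V r L"
proof -
  have len: "length L = card P" using assms distinct_card by fastforce
  have ex: "\<And>p. p \<in> P \<Longrightarrow> \<exists>i<length L. L!i = p" using assms by (auto simp: in_set_conv_nth)
  show "Tof P L \<in> P \<rightarrow>\<^sub>E {1..card P}"
  proof
    fix p assume "p \<in> P"
    then obtain i where "i < length L" "L!i = p" using ex by blast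
    then show "Tof P L p \<in> {1..card P}" using Tof_nth[OF assms] len by auto
  qed (simp add: Tof_def)
  show "bij_betw (Tof P L) P {1..card P}" unfolding bij_betw_def
  proof
    show "inj_on (Tof P L) P"
    proof (rule inj_onI)
      fix p q assume "p \<in> P" "q \<in> P" "Tof P L p = Tof P L q"
      then show "p = q" using ex[of p] ex[of q] Tof_nth[OF assms] by auto
    qed
    show "Tof P L ` P = {1..card P}"
    proof (intro equalityI subsetI)
      fix m assume "m \<in> Tof P L ` P"
      then obtain p where "p \<in> P" "m = Tof P L p" by auto
      then show "m \<in> {1..card P}" using ex[of p] Tof_nth[OF assms] len by auto
    next
      fix m assume m: "m \<in> {1..card P}"
      then have "m - 1 < length L" "m = Suc (m - 1)" using len by auto
      then have "m = Tof P L (L!(m-1))" "L!(m-1) \<in> P" using Tof_nth[OF assms] assms by auto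
      then show "m \<in> Tof P L ` P" by blast
    qed
  qed
  show "\<And>t. {q\<in>P. Tof P L q \<in> {1..t}} = set (take t L)"
  proof (intro equalityI subsetI)
    fix t q assume "q \<in> {q\<in>P. Tof P L q \<in> {1..t}}"
    then obtain i where "i < length L" "L!i = q" "Tof P L q \<in> {1..t}" using ex by blast
    then show "q \<in> set (take t L)" using Tof_nth[OF assms]
      by (auto simp: in_set_conv_nth intro!: exI[of _ i])
  next
    fix t q assume "q \<in> set (take t L)"
    then obtain i where "i < length L" "i < t" "L!i = q" by (auto simp: in_set_conv_nth)
    then show "q \<in> {q\<in>P. Tof P L q \<in> {1..t}}" using Tof_nth[OF assms] assms by auto
  qed
  show "(\<forall>p\<in>P. \<forall>q\<in>P. pstrict r p q \<longrightarrow> Tof P L p < Tof P L q) \<longleftrightarrow> V r L"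
  proof
    assume a: "\<forall>p\<in>P. \<forall>q\<in>P. pstrict r p q \<longrightarrow> Tof P L p < Tof P L q"
    show "V r L" unfolding V_def
    proof (intro allI impI)
      fix i j assume "i < length L" "j < length L" "pstrict r (L!i) (L!j)"
      moreover have "L!i \<in> P" "L!j \<in> P" using calculation assms by auto
      ultimately show "i < j" using a Tof_nth[OF assms] by fastforce
    qed
  next
    assume a: "V r L"
    show "\<forall>p\<in>P. \<forall>q\<in>P. pstrict r p q \<longrightarrow> Tof P L p < Tof P L q"
    proof (intro ballI impI)
      fix p q assume "p \<in> P" "q \<in> P" "pstrict r p q"
      moreover obtain i j where "i < length L" "L!i = p" "j < length L" "L!j = q"
        using ex calculation by metis
      ultimately show "Tof P L p < Tof P L q" using a Tof_nth[OF assms] unfolding V_def by auto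
    qed
  qed
qed

lemma Lof_Tof:
  assumes "distinct L" "set L = P"
  shows "Lof P (Tof P L) = L"
proof -
  have len: "length L = card P" using assms distinct_card by fastforce
  have inj: "inj_on (Tof P L) P" using Tof_props(2)[OF assms] by (simp add: bij_betw_def)
  show ?thesis
  proof (rule nth_equalityI)
    show "length (Lof P (Tof P L)) = length L" using len by (simp add: Lof_def)
    fix i assume "i < length (Lof P (Tof P L))"
    then have i: "i < length L" using len by (simp add: Lof_def)
    have "Lof P (Tof P L) ! i = inv_into P (Tof P L) (Suc i)" using i len by (simp add: Lof_def)
    also have "\<dots> = inv_into P (Tof P L) (Tof P L (L!i))" using Tof_nth[OF assms i] by simp
    also have "\<dots> = L!i" using inj i assms by (intro inv_into_f_f) auto
    finally show "Lof P (Tof P L) ! i = L ! i" .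
  qed
qed

lemma Lof_props:
  assumes T: "T \<in> P \<rightarrow>\<^sub>E {1..card P}" and b: "bij_betw T P {1..card P}"
  shows "distinct (Lof P T)" "set (Lof P T) = P" "Tof P (Lof P T) = T"
proof -
  have inv: "\<And>i. i < card P \<Longrightarrow> T (inv_into P T (Suc i)) = Suc i" "\<And>i. i < card P \<Longrightarrow> inv_into P T (Suc i) \<in> P"
    using bij_betw_inv_into_right[OF b] inv_into_into[of _ T P] b by (auto simp: bij_betw_def)
  show d: "distinct (Lof P T)" unfolding distinct_conv_nth
  proof (intro allI impI)
    fix i j assume "i < length (Lof P T)" "j < length (Lof P T)" "i \<noteq> j"
    then show "Lof P T ! i \<noteq> Lof P T ! j" using inv(1)[of i] inv(1)[of j] by (auto simp: Lof_def)
  qed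
  show s: "set (Lof P T) = P"
  proof (intro equalityI subsetI)
    fix p assume "p \<in> set (Lof P T)"
    then show "p \<in> P" using inv(2) by (auto simp: Lof_def)
  next
    fix p assume p: "p \<in> P"
    then have "T p \<in> {1..card P}" using T by auto
    then obtain i where i: "i < card P" "T p = Suc i" by (cases "T p") auto
    have "inv_into P T (Suc i) = p" using i p b by (metis bij_betw_def inv_into_f_f)
    then show "p \<in> set (Lof P T)" using i by (auto simp: Lof_def)
  qed
  show "Tof P (Lof P T) = T"
  proof (rule ext)
    fix p
    show "Tof P (Lof P T) p = T p"
    proof (cases "p \<in> P")
      case p: True
      then have "T p \<in> {1..card P}" using T by auto
      then obtain i where i: "i < card P" "T p = Suc i" by (cases "T p") auto
      have "inv_into P T (Suc i) = p" using i p b by (metis bij_betw_def inv_into_f_f)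
      then have "Lof P T ! i = p" using i by (simp add: Lof_def)
      moreover have "i < length (Lof P T)" using i by (simp add: Lof_def)
      ultimately show ?thesis using Tof_nth[OF d s, of i] i by simp
    next
      case False then show ?thesis using T by (simp add: Tof_def PiE_def extensional_def)
    qed
  qed
qed

lemma mem_Triples:
  assumes "distinct L" "set L = P"
  shows "(Tof P L, ts, ps) \<in> Triples P r k \<longleftrightarrow> Dgood L ts ps \<and> length ts = k \<and> C r L ts ps"
proof -
  have len: "length L = card P" using assms distinct_card by fastforce
  note tp = Tof_props[OF assms]
  have "Tof P L \<in> Lin P r \<longleftrightarrow> V r L" using tp(1,2) tp(4)[of r] by (simp add: Lin_def)
  then show ?thesis
    unfolding Triples_def mem_Collect_eq prod.case tp(3)
    unfolding Dgood_def C_def is_maximal_in_def using assms len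
    by (auto dest: in_set_takeD)
qed

lemma bij_Tof:
  "bij_betw (\<lambda>(L,ts,ps). (Tof P L, ts, ps))
     {(L,ts,ps). Dgood L ts ps \<and> set L = P \<and> length ts = k \<and> C r L ts ps} (Triples P r k)"
proof (rule bij_betw_byWitness[where f' = "\<lambda>(T,ts,ps). (Lof P T, ts, ps)"])
  show "\<forall>a\<in>{(L,ts,ps). Dgood L ts ps \<and> set L = P \<and> length ts = k \<and> C r L ts ps}.
      (\<lambda>(T,ts,ps). (Lof P T, ts, ps)) ((\<lambda>(L,ts,ps). (Tof P L, ts, ps)) a) = a"
    by (auto simp: Lof_Tof Dgood_def)
  show "\<forall>a\<in>Triples P r k. (\<lambda>(L,ts,ps). (Tof P L, ts, ps)) ((\<lambda>(T,ts,ps). (Lof P T, ts, ps)) a) = a"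
    by (auto simp: Triples_def Lin_def Lof_props)
  show "(\<lambda>(L,ts,ps). (Tof P L, ts, ps)) ` {(L,ts,ps). Dgood L ts ps \<and> set L = P \<and> length ts = k \<and> C r L ts ps}
      \<subseteq> Triples P r k"
    using mem_Triples by (fastforce simp: Dgood_def)
  show "(\<lambda>(T,ts,ps). (Lof P T, ts, ps)) ` Triples P r k
      \<subseteq> {(L,ts,ps). Dgood L ts ps \<and> set L = P \<and> length ts = k \<and> C r L ts ps}"
  proof
    fix y assume "y \<in> (\<lambda>(T,ts,ps). (Lof P T, ts, ps)) ` Triples P r k"
    then obtain T ts ps where y: "y = (Lof P T, ts, ps)" and m: "(T,ts,ps) \<in> Triples P r k" by auto
    then have T: "T \<in> P \<rightarrow>\<^sub>E {1..card P}" "bij_betw T P {1..card P}" by (auto simp: Triples_def Lin_def)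
    note lp = Lof_props[OF T]
    have "(Tof P (Lof P T), ts, ps) \<in> Triples P r k" using m lp(3) by simp
    then show "y \<in> {(L,ts,ps). Dgood L ts ps \<and> set L = P \<and> length ts = k \<and> C r L ts ps}"
      using mem_Triples[OF lp(1,2)] y lp by auto
  qed
qed


definition wof :: "'a set \<Rightarrow> nat \<Rightarrow> ('a \<Rightarrow> nat set) \<Rightarrow> 'a list" where
  "wof P k S = map (\<lambda>j. THE p. p \<in> P \<and> j \<in> S p) [1..<card P + k + 1]"

definition Sof :: "'a set \<Rightarrow> nat \<Rightarrow> 'a list \<Rightarrow> 'a \<Rightarrow> nat set" where
  "Sof P k w = (\<lambda>p\<in>P. {j\<in>{1..card P + k}. w!(j-1) = p})"

lemma length_wof: "length (wof P k S) = card P + k"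
  by (simp add: wof_def del: upt_Suc)

lemma wof_nth: "i < card P + k \<Longrightarrow> wof P k S ! i = (THE p. p \<in> P \<and> Suc i \<in> S p)"
  by (simp add: wof_def del: upt_Suc)

lemma wof_nth': assumes "j \<in> {1..card P + k}" shows "wof P k S ! (j-1) = (THE p. p \<in> P \<and> j \<in> S p)"
proof -
  have "j-1 < card P + k" using assms by auto
  from wof_nth[OF this] have "wof P k S ! (j-1) = (THE p. p \<in> P \<and> Suc (j-1) \<in> S p)" .
  moreover have "Suc (j-1) = j" using assms by auto
  ultimately show ?thesis by (simp only:)
qed

lemma LinPlus_own:
  assumes S: "S \<in> LinPlus P r k"
  shows "\<And>j. j \<in> {1..card P + k} \<Longrightarrow> \<exists>p\<in>P. j \<in> S p"
    "\<And>p j. p \<in> P \<Longrightarrow> j \<in> S p \<Longrightarrow> (THE q. q \<in> P \<and> j \<in> S q) = p"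
    "\<And>p. p \<in> P \<Longrightarrow> S p \<subseteq> {1..card P + k}"
proof -
  show "\<And>j. j \<in> {1..card P + k} \<Longrightarrow> \<exists>p\<in>P. j \<in> S p"
  proof -
    fix j assume "j \<in> {1..card P + k}"
    moreover have "(\<Union>p\<in>P. S p) = {1..card P + k}" using S by (simp add: LinPlus_def)
    ultimately show "\<exists>p\<in>P. j \<in> S p" by blast
  qed
  show "\<And>p j. p \<in> P \<Longrightarrow> j \<in> S p \<Longrightarrow> (THE q. q \<in> P \<and> j \<in> S q) = p"
  proof -
    fix p j assume "p \<in> P" "j \<in> S p"
    then show "(THE q. q \<in> P \<and> j \<in> S q) = p"
      using S unfolding LinPlus_def by (intro the_equality) blast+
  qed
  show "\<And>p. p \<in> P \<Longrightarrow> S p \<subseteq> {1..card P + k}"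
  proof -
    fix p assume "p \<in> P"
    moreover have "S \<in> P \<rightarrow>\<^sub>E Pow {1..card P + k}" using S by (simp add: LinPlus_def)
    ultimately show "S p \<subseteq> {1..card P + k}" by auto
  qed
qed

lemma bij_wof:
  "bij_betw (wof P k) (LinPlus P r k) {w. set w = P \<and> length w = card P + k \<and> V r w}"
proof (rule bij_betw_byWitness[where f' = "Sof P k"])
  have key: "wof P k S ! i \<in> P \<and> Suc i \<in> S (wof P k S ! i)"
    if S: "S \<in> LinPlus P r k" and i: "i < card P + k" for S i
  proof -
    have "Suc i \<in> {1..card P + k}" using i by simp
    then obtain p where p: "p \<in> P" "Suc i \<in> S p" using LinPlus_own(1)[OF S] by blast
    have "wof P k S ! i = p" using wof_nth[OF i, of S] LinPlus_own(2)[OF S p] by simp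
    then show ?thesis using p by simp
  qed
  show "\<forall>S\<in>LinPlus P r k. Sof P k (wof P k S) = S"
  proof
    fix S assume S: "S \<in> LinPlus P r k"
    show "Sof P k (wof P k S) = S"
    proof (rule ext)
      fix p
      show "Sof P k (wof P k S) p = S p"
      proof (cases "p \<in> P")
        case p: True
        have "{j\<in>{1..card P + k}. wof P k S ! (j-1) = p} = S p"
        proof (intro equalityI subsetI)
          fix j assume "j \<in> {j\<in>{1..card P + k}. wof P k S ! (j-1) = p}"
          then show "j \<in> S p" using key[OF S, of "j-1"] by auto
        next
          fix j assume j: "j \<in> S p"
          then have jr: "j \<in> {1..card P + k}" using LinPlus_own(3)[OF S p] by auto
          then have "wof P k S ! (j-1) = p" using wof_nth'[OF jr, of S] LinPlus_own(2)[OF S p j] by simp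
          then show "j \<in> {j\<in>{1..card P + k}. wof P k S ! (j-1) = p}" using jr by auto
        qed
        then show ?thesis using p by (simp add: Sof_def)
      next
        case False
        then show ?thesis using S by (simp add: Sof_def LinPlus_def PiE_def extensional_def)
      qed
    qed
  qed
  show "\<forall>w\<in>{w. set w = P \<and> length w = card P + k \<and> V r w}. wof P k (Sof P k w) = w"
  proof
    fix w assume "w \<in> {w. set w = P \<and> length w = card P + k \<and> V r w}"
    then have w: "set w = P" "length w = card P + k" "V r w" by auto
    show "wof P k (Sof P k w) = w"
    proof (rule nth_equalityI)
      show "length (wof P k (Sof P k w)) = length w" using w(2) by (simp only: length_wof)
      fix i assume "i < length (wof P k (Sof P k w))"
      then have i: "i < card P + k" by (simp only: length_wof)
      have "(THE p. p \<in> P \<and> Suc i \<in> Sof P k w p) = w!i"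
      proof (rule the_equality)
        show "w!i \<in> P \<and> Suc i \<in> Sof P k w (w!i)" using i w by (auto simp: Sof_def)
        fix p assume "p \<in> P \<and> Suc i \<in> Sof P k w p"
        then show "p = w!i" by (auto simp: Sof_def)
      qed
      then show "wof P k (Sof P k w) ! i = w ! i" using wof_nth[OF i] by simp
    qed
  qed
  show "wof P k ` LinPlus P r k \<subseteq> {w. set w = P \<and> length w = card P + k \<and> V r w}"
  proof
    fix w assume "w \<in> wof P k ` LinPlus P r k"
    then obtain S where S: "S \<in> LinPlus P r k" and w: "w = wof P k S" by auto
    have len: "length w = card P + k" unfolding w by (rule length_wof)
    have "set w = P"
    proof (intro equalityI subsetI)
      fix p assume "p \<in> set w"
      then obtain i where "i < length w" "w!i = p" by (auto simp: in_set_conv_nth)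
      then show "p \<in> P" using key[OF S, of i] len w by auto
    next
      fix p assume p: "p \<in> P"
      have "\<forall>p\<in>P. S p \<noteq> {}" using S by (simp add: LinPlus_def)
      then obtain j where j: "j \<in> S p" using p by blast
      then have jr: "j \<in> {1..card P + k}" using LinPlus_own(3)[OF S p] by auto
      then have "w ! (j-1) = p" using w wof_nth'[OF jr, of S] LinPlus_own(2)[OF S p j] by simp
      moreover have "j - 1 < length w" using jr len by auto
      ultimately show "p \<in> set w" by (metis nth_mem)
    qed
    moreover have "V r w" unfolding V_def
    proof (intro allI impI)
      fix i j assume i: "i < length w" and j: "j < length w" and pq: "pstrict r (w!i) (w!j)"
      have ki: "w!i \<in> P" "Suc i \<in> S (w!i)" using key[OF S, of i] i len w by auto
      have kj: "w!j \<in> P" "Suc j \<in> S (w!j)" using key[OF S, of j] j len w by auto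
      have fi: "finite (S (w!i))" "finite (S (w!j))"
        using finite_subset[OF LinPlus_own(3)[OF S ki(1)] finite_atLeastAtMost]
          finite_subset[OF LinPlus_own(3)[OF S kj(1)] finite_atLeastAtMost] by auto
      have "\<forall>p\<in>P. \<forall>q\<in>P. pstrict r p q \<longrightarrow> Max (S p) < Min (S q)" using S by (simp add: LinPlus_def)
      then have "Max (S (w!i)) < Min (S (w!j))" using ki kj pq by blast
      moreover have "Suc i \<le> Max (S (w!i))" using Max_ge[OF fi(1) ki(2)] .
      moreover have "Min (S (w!j)) \<le> Suc j" using Min_le[OF fi(2) kj(2)] .
      ultimately show "i < j" by simp
    qed
    ultimately show "w \<in> {w. set w = P \<and> length w = card P + k \<and> V r w}" using len by auto
  qed
  show "Sof P k ` {w. set w = P \<and> length w = card P + k \<and> V r w} \<subseteq> LinPlus P r k"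
  proof
    fix S assume "S \<in> Sof P k ` {w. set w = P \<and> length w = card P + k \<and> V r w}"
    then obtain w where w: "set w = P" "length w = card P + k" "V r w" and S: "S = Sof P k w" by auto
    have sub: "\<And>p. p \<in> P \<Longrightarrow> S p = {j\<in>{1..card P + k}. w!(j-1) = p}" using S by (simp add: Sof_def)
    have ne: "\<forall>p\<in>P. S p \<noteq> {}"
    proof
      fix p assume p: "p \<in> P"
      then obtain i where i: "i < length w" "w!i = p" using w(1) by (auto simp: in_set_conv_nth)
      then have "Suc i \<in> {j\<in>{1..card P + k}. w!(j-1) = p}" using w(2) by simp
      then have "Suc i \<in> S p" using sub[OF p] by simp
      then show "S p \<noteq> {}" by auto
    qed
    have un: "(\<Union>p\<in>P. S p) = {1..card P + k}"
    proof (intro equalityI subsetI)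
      fix j assume "j \<in> (\<Union>p\<in>P. S p)"
      then obtain p where "p \<in> P" "j \<in> S p" by blast
      then show "j \<in> {1..card P + k}" using sub by blast
    next
      fix j assume j: "j \<in> {1..card P + k}"
      then have "j - 1 < length w" using w(2) by (cases j) auto
      then have "w!(j-1) \<in> P" using w(1) nth_mem by blast
      moreover have "j \<in> S (w!(j-1))" using sub[OF calculation] j by simp
      ultimately show "j \<in> (\<Union>p\<in>P. S p)" by blast
    qed
    have ord: "\<forall>p\<in>P. \<forall>q\<in>P. pstrict r p q \<longrightarrow> Max (S p) < Min (S q)"
    proof (intro ballI impI)
      fix p q assume p: "p \<in> P" and q: "q \<in> P" and pq: "pstrict r p q"
      have f: "finite (S p)" "finite (S q)" unfolding sub[OF p] sub[OF q] by auto
      have "S p \<noteq> {}" "S q \<noteq> {}" using ne p q by auto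
      then have "Max (S p) \<in> S p" "Min (S q) \<in> S q" using Max_in[OF f(1)] Min_in[OF f(2)] by auto
      then have a: "Max (S p) \<in> {1..card P + k}" "w!(Max (S p) - 1) = p"
        and b: "Min (S q) \<in> {1..card P + k}" "w!(Min (S q) - 1) = q"
        unfolding sub[OF p] sub[OF q] by auto
      have l: "Max (S p) - 1 < length w" "Min (S q) - 1 < length w" using a(1) b(1) w(2) by auto
      have "pstrict r (w!(Max (S p) - 1)) (w!(Min (S q) - 1))" using a(2) b(2) pq by simp
      then have "Max (S p) - 1 < Min (S q) - 1"
        using w(3) l unfolding V_def by blast
      then show "Max (S p) < Min (S q)" by simp
    qed
    have "S \<in> P \<rightarrow>\<^sub>E Pow {1..card P + k}" using S by (auto simp: Sof_def)
    moreover have "\<forall>p\<in>P. \<forall>q\<in>P. p \<noteq> q \<longrightarrow> S p \<inter> S q = {}"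
    proof (intro ballI impI)
      fix p q assume "p \<in> P" "q \<in> P" "p \<noteq> q"
      then show "S p \<inter> S q = {}" unfolding sub[OF \<open>p \<in> P\<close>] sub[OF \<open>q \<in> P\<close>] by auto
    qed
    ultimately show "S \<in> LinPlus P r k" using ne un ord unfolding LinPlus_def mem_Collect_eq by (intro conjI)
  qed
qed

theorem proposition21:
  fixes P :: "'a set" and r :: "('a \<times> 'a) set" and k :: nat
  assumes "finite P" and "partial_order_on P r"
  shows "\<exists>f. bij_betw f (LinPlus P r k) (Triples P r k)"
  using bij_betw_trans[OF bij_betw_trans[OF bij_wof bij_dec[OF assms(1)]] bij_Tof] by blast

end
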